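(* Every 2-local derivation of a finite dimensional formally real exceptional simple Jordan algebra $\mathcal{A}$ is a derivation.
   Context: A real Jordan algebra is formally real if $\sum_i a_i^2=0$ (finite sum) implies each $a_i=0$. Exceptional means not special, i.e. not isomorphic to a Jordan subalgebra of $R^+$ (with product $\frac12(ab+ba)$) for an associative algebra $R$. A derivation is a linear map $D$ with $D(xy)=D(x)y+xD(y)$. A 2-local derivation is a map $\Delta$ (not assumed linear) such that for every $x,y$ there is a derivation $D_{x,y}$ with $\Delta(x)=D_{x,y}(x)$, $\Delta(y)=D_{x,y}(y)$. *)

theory Defs
  imports Complex_Main
begin

definition jordan_algebra :: "('a::real_vector \<Rightarrow> 'a \<Rightarrow> 'a) \<Rightarrow> bool" where
  "jordan_algebra mult \<longleftrightarrow>
     (\<forall>x y z. mult (x + y) z = mult x z + mult y z) \<and>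
     (\<forall>c x y. mult (c *\<^sub>R x) y = c *\<^sub>R mult x y) \<and>
     (\<forall>x y. mult x y = mult y x) \<and>
     (\<forall>x y. mult (mult x y) (mult x x) = mult x (mult y (mult x x)))"

definition finite_dim_space :: "'a::real_vector itself \<Rightarrow> bool" where
  "finite_dim_space _ \<longleftrightarrow> (\<exists>B::'a set. finite B \<and> span B = UNIV)"

definition formally_real :: "('a::real_vector \<Rightarrow> 'a \<Rightarrow> 'a) \<Rightarrow> bool" where
  "formally_real mult \<longleftrightarrow>
     (\<forall>(n::nat) (a::nat \<Rightarrow> 'a). (\<Sum>i<n. mult (a i) (a i)) = 0 \<longrightarrow> (\<forall>i<n. a i = 0))"

definition jordan_ideal :: "('a::real_vector \<Rightarrow> 'a \<Rightarrow> 'a) \<Rightarrow> 'a set \<Rightarrow> bool" where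
  "jordan_ideal mult I \<longleftrightarrow> subspace I \<and> (\<forall>x y. y \<in> I \<longrightarrow> mult x y \<in> I)"

definition simple_jordan :: "('a::real_vector \<Rightarrow> 'a \<Rightarrow> 'a) \<Rightarrow> bool" where
  "simple_jordan mult \<longleftrightarrow>
     (\<exists>x y. mult x y \<noteq> 0) \<and>
     (\<forall>I. jordan_ideal mult I \<longrightarrow> I = {0} \<or> I = UNIV)"

definition assoc_real_algebra ::
  "'r set \<Rightarrow> ('r \<Rightarrow> 'r \<Rightarrow> 'r) \<Rightarrow> (real \<Rightarrow> 'r \<Rightarrow> 'r) \<Rightarrow> ('r \<Rightarrow> 'r \<Rightarrow> 'r) \<Rightarrow> 'r \<Rightarrow> bool" where
  "assoc_real_algebra S add sc mul z \<longleftrightarrow>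
     z \<in> S \<and>
     (\<forall>x\<in>S. \<forall>y\<in>S. add x y \<in> S \<and> mul x y \<in> S) \<and>
     (\<forall>c. \<forall>x\<in>S. sc c x \<in> S) \<and>
     (\<forall>x\<in>S. \<forall>y\<in>S. \<forall>w\<in>S. add (add x y) w = add x (add y w)) \<and>
     (\<forall>x\<in>S. \<forall>y\<in>S. add x y = add y x) \<and>
     (\<forall>x\<in>S. add z x = x) \<and>
     (\<forall>x\<in>S. \<exists>y\<in>S. add x y = z) \<and>
     (\<forall>c. \<forall>x\<in>S. \<forall>y\<in>S. sc c (add x y) = add (sc c x) (sc c y)) \<and>
     (\<forall>c d. \<forall>x\<in>S. sc (c + d) x = add (sc c x) (sc d x)) \<and>
     (\<forall>c d. \<forall>x\<in>S. sc c (sc d x) = sc (c * d) x) \<and>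
     (\<forall>x\<in>S. sc 1 x = x) \<and>
     (\<forall>x\<in>S. \<forall>y\<in>S. \<forall>w\<in>S. mul (add x y) w = add (mul x w) (mul y w)) \<and>
     (\<forall>x\<in>S. \<forall>y\<in>S. \<forall>w\<in>S. mul w (add x y) = add (mul w x) (mul w y)) \<and>
     (\<forall>c. \<forall>x\<in>S. \<forall>y\<in>S. mul (sc c x) y = sc c (mul x y) \<and> mul x (sc c y) = sc c (mul x y)) \<and>
     (\<forall>x\<in>S. \<forall>y\<in>S. \<forall>w\<in>S. mul (mul x y) w = mul x (mul y w))"

text \<open>Special: isomorphic (via an injective linear Jordan homomorphism) to a Jordan
subalgebra of R^+ for an associative real algebra R.  The elements of R are taken
from the type nat => real (of the cardinality of the continuum); this loses no
generality for finite-dimensional A, since A embeds into R iff it embeds into the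
subalgebra of R generated by its image, which has countable dimension and hence
cardinality at most that of the continuum.\<close>

definition special_jordan :: "('a::real_vector \<Rightarrow> 'a \<Rightarrow> 'a) \<Rightarrow> bool" where
  "special_jordan mult \<longleftrightarrow>
     (\<exists>(S::(nat \<Rightarrow> real) set) add sc mul z (\<phi>::'a \<Rightarrow> (nat \<Rightarrow> real)).
        assoc_real_algebra S add sc mul z \<and>
        (\<forall>x. \<phi> x \<in> S) \<and> inj \<phi> \<and>
        (\<forall>x y. \<phi> (x + y) = add (\<phi> x) (\<phi> y)) \<and>
        (\<forall>c x. \<phi> (c *\<^sub>R x) = sc c (\<phi> x)) \<and>
        (\<forall>x y. \<phi> (mult x y) = sc (1/2) (add (mul (\<phi> x) (\<phi> y)) (mul (\<phi> y) (\<phi> x)))))"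

definition exceptional_jordan :: "('a::real_vector \<Rightarrow> 'a \<Rightarrow> 'a) \<Rightarrow> bool" where
  "exceptional_jordan mult \<longleftrightarrow> \<not> special_jordan mult"

definition jordan_derivation :: "('a::real_vector \<Rightarrow> 'a \<Rightarrow> 'a) \<Rightarrow> ('a \<Rightarrow> 'a) \<Rightarrow> bool" where
  "jordan_derivation mult D \<longleftrightarrow>
     linear D \<and> (\<forall>x y. D (mult x y) = mult (D x) y + mult x (D y))"

definition two_local_derivation :: "('a::real_vector \<Rightarrow> 'a \<Rightarrow> 'a) \<Rightarrow> ('a \<Rightarrow> 'a) \<Rightarrow> bool" where
  "two_local_derivation mult \<Delta> \<longleftrightarrow>
     (\<forall>x y. \<exists>D. jordan_derivation mult D \<and> \<Delta> x = D x \<and> \<Delta> y = D y)"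

end

theory Submission
  imports Defs "HOL-Computational_Algebra.Computational_Algebra" "HOL-Computational_Algebra.Field_as_Ring"
begin


definition isbasis :: "'a::real_vector set \<Rightarrow> bool" where
  "isbasis B \<longleftrightarrow> finite B \<and> independent B \<and> span B = UNIV"

definition trc :: "'a::real_vector set \<Rightarrow> ('a \<Rightarrow> 'a) \<Rightarrow> real" where
  "trc B T = (\<Sum>b\<in>B. representation B (T b) b)"

lemma rep_add: "isbasis B \<Longrightarrow> representation B (u + v) b = representation B u b + representation B v b"
  unfolding isbasis_def by (simp add: real_vector.representation_add)
lemma rep_scale: "isbasis B \<Longrightarrow> representation B (c *\<^sub>R v) b = c * representation B v b"
  unfolding isbasis_def by (simp add: real_vector.representation_scale)
lemma rep_sum: "isbasis B \<Longrightarrow> representation B (\<Sum>i\<in>I. f i) b = (\<Sum>i\<in>I. representation B (f i) b)"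
  unfolding isbasis_def by (simp add: real_vector.representation_sum)
lemma rep_linear: "isbasis B \<Longrightarrow> linear (\<lambda>v. representation B v b)"
  by (rule linearI) (simp_all add: rep_add rep_scale)
lemma rep_expand: "isbasis B \<Longrightarrow> (\<Sum>b\<in>B. representation B v b *\<^sub>R b) = v"
  unfolding isbasis_def by (auto intro: real_vector.sum_representation_eq)

lemma trc_decomp:
  assumes B: "isbasis B" and U: "finite U" and lin: "\<And>u. u \<in> U \<Longrightarrow> linear (\<phi> u)"
    and T: "\<And>v. T v = (\<Sum>u\<in>U. \<phi> u v *\<^sub>R g u)"
  shows "trc B T = (\<Sum>u\<in>U. \<phi> u (g u))"
proof -
  have "trc B T = (\<Sum>b\<in>B. \<Sum>u\<in>U. \<phi> u b * representation B (g u) b)"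
    unfolding trc_def T by (simp add: rep_sum[OF B] rep_scale[OF B])
  also have "\<dots> = (\<Sum>u\<in>U. \<Sum>b\<in>B. representation B (g u) b * \<phi> u b)"
    by (subst sum.swap) (simp add: mult.commute)
  also have "\<dots> = (\<Sum>u\<in>U. \<phi> u (\<Sum>b\<in>B. representation B (g u) b *\<^sub>R b))"
    by (rule sum.cong[OF refl]) (simp add: linear_sum[OF lin] linear_scale[OF lin])
  also have "\<dots> = (\<Sum>u\<in>U. \<phi> u (g u))" by (simp add: rep_expand[OF B])
  finally show ?thesis .
qed

lemma trc_comm:
  assumes B: "isbasis B" and S: "linear S" and T: "linear T"
  shows "trc B (\<lambda>v. S (T v)) = trc B (\<lambda>v. T (S v))"
proof -
  have fin: "finite B" using B unfolding isbasis_def by blast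
  have "S (T v) = (\<Sum>b\<in>B. representation B (T v) b *\<^sub>R S b)" for v
  proof -
    have "S (T v) = S (\<Sum>b\<in>B. representation B (T v) b *\<^sub>R b)" by (simp add: rep_expand[OF B])
    also have "\<dots> = (\<Sum>b\<in>B. representation B (T v) b *\<^sub>R S b)"
      by (simp add: linear_sum[OF S] linear_scale[OF S])
    finally show ?thesis .
  qed
  moreover have "linear (\<lambda>v. representation B (T v) b)" for b
    using linear_compose[OF T rep_linear[OF B, of b]] by (simp add: o_def)
  ultimately have "trc B (\<lambda>v. S (T v)) = (\<Sum>b\<in>B. representation B (T (S b)) b)"
    by (intro trc_decomp[OF B fin]) auto
  then show ?thesis unfolding trc_def .
qed

lemma trc_add: "isbasis B \<Longrightarrow> trc B (\<lambda>v. S v + T v) = trc B S + trc B T"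
  unfolding trc_def by (simp add: rep_add sum.distrib)
lemma trc_scale: "isbasis B \<Longrightarrow> trc B (\<lambda>v. c *\<^sub>R T v) = c * trc B T"
  unfolding trc_def by (simp add: rep_scale sum_distrib_left)
lemma trc_diff: "isbasis B \<Longrightarrow> trc B (\<lambda>v. S v - T v) = trc B S - trc B T"
  using trc_add[of B S "\<lambda>v. (-1) *\<^sub>R T v"] trc_scale[of B "-1" T] by simp

lemma trc_proj:
  assumes B: "isbasis B" and P: "linear P" and idem: "\<And>v. P (P v) = P v"
  shows "\<exists>n::nat. trc B P = real n \<and> (\<forall>w. P w \<noteq> 0 \<longrightarrow> n > 0)"
proof -
  obtain U where U: "U \<subseteq> range P" "independent U" "range P \<subseteq> span U"
    using real_vector.maximal_independent_subset[of "range P"] by blast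
  have finB: "finite B" and spB: "span B = UNIV" using B unfolding isbasis_def by auto
  have finU: "finite U"
    using real_vector.independent_span_bound[OF finB U(2)] spB by auto
  have inspan: "P v \<in> span U" for v using U(3) by auto
  have exp: "P v = (\<Sum>u\<in>U. representation U (P v) u *\<^sub>R u)" for v
    using real_vector.sum_representation_eq[OF U(2) inspan finU] by simp
  have lin: "linear (\<lambda>v. representation U (P v) u)" for u
    by (rule linearI)
       (simp_all add: linear_add[OF P] linear_scale[OF P] real_vector.representation_add[OF U(2) inspan inspan]
         real_vector.representation_scale[OF U(2) inspan])
  have "trc B P = (\<Sum>u\<in>U. representation U (P u) u)"
    by (rule trc_decomp[OF B finU]) (use lin exp in auto)
  also have "\<dots> = (\<Sum>u\<in>U. 1)"
  proof (rule sum.cong[OF refl])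
    fix u assume u: "u \<in> U"
    then obtain w where "u = P w" using U(1) by auto
    then have "P u = u" using idem by simp
    then show "representation U (P u) u = 1"
      using real_vector.representation_basis[OF U(2) u] by simp
  qed
  finally have t: "trc B P = real (card U)" by simp
  have "card U > 0" if "P w \<noteq> 0" for w
  proof -
    have "U \<noteq> {}" using inspan[of w] that by auto
    then show ?thesis using finU by auto
  qed
  then show ?thesis using t by blast
qed

lemma trc_peirce:
  assumes B: "isbasis B" and T: "linear T" and pe: "\<And>v. T v = 3 *\<^sub>R T (T v) - 2 *\<^sub>R T (T (T v))"
    and w: "T w = w" "w \<noteq> 0"
  shows "trc B T > 0"
proof -
  define P1 where "P1 v = 2 *\<^sub>R T (T v) - T v" for v
  define Ph where "Ph v = 4 *\<^sub>R T v - 4 *\<^sub>R T (T v)" for v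
  have lT: "T (a + b) = T a + T b" "T (c *\<^sub>R a) = c *\<^sub>R T a" "T (a - b) = T a - T b" for a b c
    using linear_add[OF T] linear_scale[OF T] linear_diff[OF T] by auto
  have T3: "T (T (T v)) = (3/2) *\<^sub>R T (T v) - (1/2) *\<^sub>R T v" for v
  proof -
    have h: "2 *\<^sub>R T (T (T v)) = 3 *\<^sub>R T (T v) - T v" using pe[of v] by (simp add: algebra_simps)
    have "T (T (T v)) = (1/2) *\<^sub>R (2 *\<^sub>R T (T (T v)))" by simp
    also have "\<dots> = (1/2) *\<^sub>R (3 *\<^sub>R T (T v) - T v)" using h by simp
    also have "\<dots> = (3/2) *\<^sub>R T (T v) - (1/2) *\<^sub>R T v" by (simp add: algebra_simps)
    finally show ?thesis .
  qed
  have T4: "T (T (T (T v))) = (7/4) *\<^sub>R T (T v) - (3/4) *\<^sub>R T v" for v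
  proof -
    have "T (T (T (T v))) = (3/2) *\<^sub>R T (T (T v)) - (1/2) *\<^sub>R T (T v)" using T3[of "T v"] .
    also have "\<dots> = (7/4) *\<^sub>R T (T v) - (3/4) *\<^sub>R T v" unfolding T3 by (simp add: algebra_simps) (simp add: scaleR_add_left[symmetric])
    finally show ?thesis .
  qed
  have lP1: "linear P1" unfolding P1_def by (rule linearI) (simp_all add: lT algebra_simps)
  have lPh: "linear Ph" unfolding Ph_def by (rule linearI) (simp_all add: lT algebra_simps)
  have h: "2 *\<^sub>R T (T (T v)) = 3 *\<^sub>R T (T v) - T v" for v using pe[of v] by (simp add: algebra_simps)
  have c3: "(3::real) *\<^sub>R a = 2 *\<^sub>R a + a" for a :: 'a
  proof -
    have "(3::real) *\<^sub>R a = (2 + 1) *\<^sub>R a" by simp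
    then show ?thesis by (simp only: scaleR_add_left scaleR_one)
  qed
  have TP1: "T (P1 v) = P1 v" for v
  proof -
    have "T (P1 v) = 2 *\<^sub>R T (T (T v)) - T (T v)" unfolding P1_def by (simp add: lT)
    also have "\<dots> = (2 *\<^sub>R T (T v) + T (T v) - T v) - T (T v)" by (simp add: h c3)
    also have "\<dots> = P1 v" unfolding P1_def by simp
    finally show ?thesis .
  qed
  have TPh: "T (Ph v) = (1/2) *\<^sub>R Ph v" for v
  proof -
    have "T (Ph v) = 4 *\<^sub>R T (T v) - 2 *\<^sub>R (2 *\<^sub>R T (T (T v)))" unfolding Ph_def by (simp add: lT)
    also have "\<dots> = 4 *\<^sub>R T (T v) - 2 *\<^sub>R (2 *\<^sub>R T (T v) + T (T v) - T v)" by (simp only: h c3)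
    also have "\<dots> = 2 *\<^sub>R T v - 2 *\<^sub>R T (T v)" by (simp add: algebra_simps)
    also have "\<dots> = (1/2) *\<^sub>R Ph v" unfolding Ph_def by (simp add: algebra_simps)
    finally show ?thesis .
  qed
  have iP1: "P1 (P1 v) = P1 v" for v
  proof -
    have "P1 (P1 v) = 2 *\<^sub>R P1 v - P1 v" unfolding P1_def[of "P1 v"] TP1 ..
    then show ?thesis by (simp add: scaleR_2)
  qed
  have iPh: "Ph (Ph v) = Ph v" for v
  proof -
    have "Ph (Ph v) = 4 *\<^sub>R ((1/2) *\<^sub>R Ph v) - 4 *\<^sub>R ((1/2) *\<^sub>R ((1/2) *\<^sub>R Ph v))"
      unfolding Ph_def[of "Ph v"] TPh lT ..
    then show ?thesis by (simp add: scaleR_2)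
  qed
  have TP: "T = (\<lambda>v. P1 v + (1/2) *\<^sub>R Ph v)" unfolding P1_def Ph_def by (rule ext) (simp add: algebra_simps scaleR_2)
  have "trc B T = trc B P1 + (1/2) * trc B Ph"
    by (subst TP) (simp add: trc_add[OF B] trc_scale[OF B])
  moreover obtain n1 where "trc B P1 = real n1" "\<forall>w. P1 w \<noteq> 0 \<longrightarrow> n1 > 0" using trc_proj[OF B lP1 iP1] by blast
  moreover obtain n2 where "trc B Ph = real n2" using trc_proj[OF B lPh iPh] by blast
  moreover have "P1 w \<noteq> 0" unfolding P1_def using w by (simp add: scaleR_2)
  ultimately show ?thesis by auto
qed



locale jalg =
  fixes mult :: "'a::real_vector \<Rightarrow> 'a \<Rightarrow> 'a" (infixl "\<diamond>" 70)
  assumes add_left: "(x + y) \<diamond> z = x \<diamond> z + y \<diamond> z"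
  and scale_left: "(c *\<^sub>R x) \<diamond> y = c *\<^sub>R (x \<diamond> y)"
  and comm: "x \<diamond> y = y \<diamond> x"
  and jordan: "(x \<diamond> y) \<diamond> (x \<diamond> x) = x \<diamond> (y \<diamond> (x \<diamond> x))"
begin

lemma add_right: "z \<diamond> (x + y) = z \<diamond> x + z \<diamond> y"
  by (metis add_left comm)
lemma scale_right: "y \<diamond> (c *\<^sub>R x) = c *\<^sub>R (y \<diamond> x)"
  by (metis scale_left comm)
lemma zero_left[simp]: "0 \<diamond> x = 0"
  by (metis scale_left scale_zero_left)
lemma zero_right[simp]: "x \<diamond> 0 = 0"
  by (metis zero_left comm)
lemma minus_left: "(- x) \<diamond> y = - (x \<diamond> y)"
  by (metis scale_left scaleR_minus1_left)
lemma minus_right: "y \<diamond> (- x) = - (y \<diamond> x)"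
  by (metis minus_left comm)
lemma diff_left: "(x - y) \<diamond> z = x \<diamond> z - y \<diamond> z"
  by (simp only: diff_conv_add_uminus add_left minus_left)
lemma diff_right: "z \<diamond> (x - y) = z \<diamond> x - z \<diamond> y"
  by (simp only: diff_conv_add_uminus add_right minus_right)

lemmas bil = add_left add_right scale_left scale_right minus_left minus_right diff_left diff_right

lemma linear_L: "linear (\<lambda>v. x \<diamond> v)"
  by (rule linearI) (simp_all add: add_right scale_right)
lemma linear_R: "linear (\<lambda>v. v \<diamond> x)"
  by (rule linearI) (simp_all add: add_left scale_left)

lemma sum_right: "x \<diamond> (\<Sum>i\<in>S. f i) = (\<Sum>i\<in>S. x \<diamond> f i)"
  using linear_sum[OF linear_L] by blast
lemma sum_left: "(\<Sum>i\<in>S. f i) \<diamond> x = (\<Sum>i\<in>S. f i \<diamond> x)"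
  using linear_sum[OF linear_R] by blast

lemma lin_full:
  "(a \<diamond> y) \<diamond> (b \<diamond> c) + (b \<diamond> y) \<diamond> (c \<diamond> a) + (c \<diamond> y) \<diamond> (a \<diamond> b)
   = a \<diamond> (y \<diamond> (b \<diamond> c)) + b \<diamond> (y \<diamond> (c \<diamond> a)) + c \<diamond> (y \<diamond> (a \<diamond> b))"
proof -
  define T where "T a b c = (a \<diamond> y) \<diamond> (b \<diamond> c) - a \<diamond> (y \<diamond> (b \<diamond> c))" for a b c
  have J: "T x x x = 0" for x unfolding T_def using jordan[of x y] by simp
  have "T (a+b+c) (a+b+c) (a+b+c) - T (a+b) (a+b) (a+b) - T (a+c) (a+c) (a+c) - T (b+c) (b+c) (b+c)
     + T a a a + T b b b + T c c c = 2 *\<^sub>R (T a b c + T b c a + T c a b)"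
    unfolding T_def by (simp add: bil algebra_simps scaleR_2 comm[of c a] comm[of b a] comm[of c b])
  then have "T a b c + T b c a + T c a b = 0" by (simp add: J)
  then show ?thesis unfolding T_def by (simp add: algebra_simps)
qed

lemma J2:
  "(y \<diamond> (c \<diamond> a)) \<diamond> b = (a \<diamond> y) \<diamond> (c \<diamond> b) + (c \<diamond> a) \<diamond> (y \<diamond> b) + (c \<diamond> y) \<diamond> (a \<diamond> b)
     - a \<diamond> (y \<diamond> (c \<diamond> b)) - c \<diamond> (y \<diamond> (a \<diamond> b))"
proof -
  have "(a \<diamond> y) \<diamond> (b \<diamond> c) + (b \<diamond> y) \<diamond> (c \<diamond> a) + (c \<diamond> y) \<diamond> (a \<diamond> b)
   = a \<diamond> (y \<diamond> (b \<diamond> c)) + b \<diamond> (y \<diamond> (c \<diamond> a)) + c \<diamond> (y \<diamond> (a \<diamond> b))" by (rule lin_full)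
  moreover have "b \<diamond> c = c \<diamond> b" "b \<diamond> (y \<diamond> (c \<diamond> a)) = (y \<diamond> (c \<diamond> a)) \<diamond> b"
    "(b \<diamond> y) \<diamond> (c \<diamond> a) = (c \<diamond> a) \<diamond> (y \<diamond> b)" by (simp_all add: comm)
  ultimately show ?thesis by (simp add: algebra_simps)
qed

definition Dr :: "'a \<Rightarrow> 'a \<Rightarrow> 'a \<Rightarrow> 'a" where
  "Dr a c v = a \<diamond> (c \<diamond> v) - c \<diamond> (a \<diamond> v)"

lemma linear_Dr: "linear (Dr a c)"
  unfolding Dr_def by (rule linearI) (simp_all add: bil algebra_simps)

lemma Dr_deriv: "Dr a c (y \<diamond> b) = Dr a c y \<diamond> b + y \<diamond> Dr a c b"
proof -
  have 1: "(a \<diamond> (c \<diamond> y)) \<diamond> b = (y \<diamond> a) \<diamond> (c \<diamond> b) + (c \<diamond> y) \<diamond> (a \<diamond> b) + (c \<diamond> a) \<diamond> (y \<diamond> b)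
     - y \<diamond> (a \<diamond> (c \<diamond> b)) - c \<diamond> (a \<diamond> (y \<diamond> b))" by (rule J2)
  have 2: "(c \<diamond> (a \<diamond> y)) \<diamond> b = (y \<diamond> c) \<diamond> (a \<diamond> b) + (a \<diamond> y) \<diamond> (c \<diamond> b) + (a \<diamond> c) \<diamond> (y \<diamond> b)
     - y \<diamond> (c \<diamond> (a \<diamond> b)) - a \<diamond> (c \<diamond> (y \<diamond> b))" by (rule J2)
  have 3: "y \<diamond> a = a \<diamond> y" "y \<diamond> c = c \<diamond> y" "a \<diamond> c = c \<diamond> a" by (simp_all add: comm)
  show ?thesis unfolding Dr_def using 1 2 3 by (simp add: bil algebra_simps)
qed

lemma Dr_jd: "jordan_derivation mult (Dr a c)"
  unfolding jordan_derivation_def using linear_Dr Dr_deriv by blast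

primrec pw :: "'a \<Rightarrow> nat \<Rightarrow> 'a" where
  "pw x 0 = x"
| "pw x (Suc n) = x \<diamond> pw x n"

lemma pw_rec: "pw x (Suc (Suc n)) \<diamond> v = 2 *\<^sub>R (pw x (Suc n) \<diamond> (x \<diamond> v)) + (x \<diamond> x) \<diamond> (pw x n \<diamond> v)
   - pw x n \<diamond> (x \<diamond> (x \<diamond> v)) - x \<diamond> (x \<diamond> (pw x n \<diamond> v))"
proof -
  have "(x \<diamond> (x \<diamond> pw x n)) \<diamond> v = (pw x n \<diamond> x) \<diamond> (x \<diamond> v) + (x \<diamond> pw x n) \<diamond> (x \<diamond> v) + (x \<diamond> x) \<diamond> (pw x n \<diamond> v)
     - pw x n \<diamond> (x \<diamond> (x \<diamond> v)) - x \<diamond> (x \<diamond> (pw x n \<diamond> v))" by (rule J2)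
  moreover have "pw x n \<diamond> x = x \<diamond> pw x n" by (rule comm)
  ultimately show ?thesis by (simp add: scaleR_2)
qed

lemma pw_comm_aux:
  "(\<forall>v. pw x n \<diamond> (x \<diamond> v) = x \<diamond> (pw x n \<diamond> v)) \<and> (\<forall>v. pw x n \<diamond> ((x \<diamond> x) \<diamond> v) = (x \<diamond> x) \<diamond> (pw x n \<diamond> v))
 \<and> (\<forall>v. pw x (Suc n) \<diamond> (x \<diamond> v) = x \<diamond> (pw x (Suc n) \<diamond> v)) \<and> (\<forall>v. pw x (Suc n) \<diamond> ((x \<diamond> x) \<diamond> v) = (x \<diamond> x) \<diamond> (pw x (Suc n) \<diamond> v))"
proof (induction n)
  case 0
  have Q: "x \<diamond> ((x \<diamond> x) \<diamond> v) = (x \<diamond> x) \<diamond> (x \<diamond> v)" for v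
    using jordan[of x v] by (metis comm)
  show ?case using Q by simp
next
  case (Suc n)
  let ?U = "pw x n" and ?V = "pw x (Suc n)" and ?q = "x \<diamond> x"
  have UA: "?U \<diamond> (x \<diamond> v) = x \<diamond> (?U \<diamond> v)" for v using Suc by blast
  have UQ: "?U \<diamond> (?q \<diamond> v) = ?q \<diamond> (?U \<diamond> v)" for v using Suc by blast
  have VA: "?V \<diamond> (x \<diamond> v) = x \<diamond> (?V \<diamond> v)" for v using Suc by blast
  have VQ: "?V \<diamond> (?q \<diamond> v) = ?q \<diamond> (?V \<diamond> v)" for v using Suc by blast
  have QA: "?q \<diamond> (x \<diamond> v) = x \<diamond> (?q \<diamond> v)" for v
    using jordan[of x v] by (metis comm)
  have W: "pw x (Suc (Suc n)) \<diamond> v = 2 *\<^sub>R (?V \<diamond> (x \<diamond> v)) + ?q \<diamond> (?U \<diamond> v)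
   - ?U \<diamond> (x \<diamond> (x \<diamond> v)) - x \<diamond> (x \<diamond> (?U \<diamond> v))" for v by (rule pw_rec)
  have A: "pw x (Suc (Suc n)) \<diamond> (x \<diamond> v) = x \<diamond> (pw x (Suc (Suc n)) \<diamond> v)" for v
    unfolding W by (simp add: bil UA VA QA del: pw.simps)
  have QA': "x \<diamond> (?q \<diamond> v) = ?q \<diamond> (x \<diamond> v)" for v using QA by simp
  have B: "pw x (Suc (Suc n)) \<diamond> (?q \<diamond> v) = ?q \<diamond> (pw x (Suc (Suc n)) \<diamond> v)" for v
    unfolding W by (simp add: bil UQ VQ QA' del: pw.simps)
  show ?case using A B Suc by blast
qed

lemma pw_comm: "pw x n \<diamond> (x \<diamond> v) = x \<diamond> (pw x n \<diamond> v)"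
  using pw_comm_aux by blast

lemma pw_add: "pw x i \<diamond> pw x j = pw x (Suc (i + j))"
proof (induction i)
  case 0 then show ?case by simp
next
  case (Suc i)
  have "pw x (Suc i) \<diamond> pw x j = pw x j \<diamond> (x \<diamond> pw x i)" by (simp add: comm)
  also have "\<dots> = x \<diamond> (pw x j \<diamond> pw x i)" by (rule pw_comm)
  also have "\<dots> = x \<diamond> (pw x i \<diamond> pw x j)" by (simp add: comm)
  finally show ?case using Suc by simp
qed

definition xp :: "'a \<Rightarrow> nat \<Rightarrow> 'a" where
  "xp x n = (case n of 0 \<Rightarrow> 0 | Suc m \<Rightarrow> pw x m)"

lemma xp_0[simp]: "xp x 0 = 0" and xp_Suc[simp]: "xp x (Suc m) = pw x m"
  by (simp_all add: xp_def)

lemma xp_add: "xp x i \<diamond> xp x j = (if i = 0 \<or> j = 0 then 0 else xp x (i + j))"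
  by (cases i; cases j) (simp_all add: pw_add del: pw.simps)

definition ev :: "'a \<Rightarrow> real poly \<Rightarrow> 'a" where
  "ev x p = (\<Sum>i\<le>degree p. coeff p i *\<^sub>R xp x i)"

lemma ev_bound: "degree p \<le> n \<Longrightarrow> ev x p = (\<Sum>i\<le>n. coeff p i *\<^sub>R xp x i)"
  unfolding ev_def
  by (rule sum.mono_neutral_left) (auto simp: coeff_eq_0)

lemma ev_add: "ev x (p + q) = ev x p + ev x q"
proof -
  let ?n = "max (degree p) (degree q)"
  have "degree (p + q) \<le> ?n" by (rule degree_add_le) auto
  then show ?thesis
    by (simp add: ev_bound[of _ ?n] sum.distrib scaleR_add_left)
qed

lemma ev_smult: "ev x (smult c p) = c *\<^sub>R ev x p"
  by (simp add: ev_bound[of _ "degree p"] scaleR_sum_right)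

lemma ev_minus: "ev x (- p) = - ev x p"
  using ev_smult[of x "-1" p] by simp

lemma ev_diff: "ev x (p - q) = ev x p - ev x q"
  using ev_add[of x p "-q"] ev_minus by simp

lemma ev_zero[simp]: "ev x 0 = 0"
  by (simp add: ev_def)

lemma ev_sum: "ev x (\<Sum>k\<in>S. f k) = (\<Sum>k\<in>S. ev x (f k))"
  by (induction S rule: infinite_finite_induct) (simp_all add: ev_add)

lemma ev_monom: "ev x (monom c n) = c *\<^sub>R xp x n"
proof -
  have *: "(if n = i then c else 0) *\<^sub>R v = (if i = n then c *\<^sub>R v else 0)" for i and v :: 'a by auto
  show ?thesis by (simp add: ev_bound[of _ n] degree_monom_le * sum.delta)
qed

lemma ev_mult:
  assumes "coeff p 0 = 0" "coeff q 0 = 0"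
  shows "ev x (p * q) = ev x p \<diamond> ev x q"
proof -
  have "p * q = (\<Sum>i\<le>degree p. monom (coeff p i) i) * (\<Sum>j\<le>degree q. monom (coeff q j) j)"
    by (simp add: poly_as_sum_of_monoms)
  also have "\<dots> = (\<Sum>i\<le>degree p. \<Sum>j\<le>degree q. monom (coeff p i * coeff q j) (i + j))"
    by (simp add: sum_product mult_monom)
  finally have 1: "ev x (p * q) = (\<Sum>i\<le>degree p. \<Sum>j\<le>degree q. (coeff p i * coeff q j) *\<^sub>R xp x (i + j))"
    by (simp add: ev_sum ev_monom)
  have 2: "ev x p \<diamond> ev x q = (\<Sum>i\<le>degree p. \<Sum>j\<le>degree q. (coeff p i * coeff q j) *\<^sub>R (xp x i \<diamond> xp x j))"
    unfolding ev_def sum_left unfolding sum_right by (simp add: scale_left scale_right mult.commute)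
  show ?thesis unfolding 1 2
    by (rule sum.cong[OF refl], rule sum.cong[OF refl]) (use assms in \<open>auto simp: xp_add\<close>)
qed

lemma ev_mult_zero:
  assumes "ev x m = 0" "coeff m 0 = 0"
  shows "ev x (m * r) = 0"
proof -
  define r' where "r' = r - [:coeff r 0:]"
  have r: "r = r' + [:coeff r 0:]" unfolding r'_def by simp
  have c: "coeff r' 0 = 0" unfolding r'_def by simp
  have "m * r = m * r' + smult (coeff r 0) m" by (subst r) (simp add: algebra_simps)
  then show ?thesis using ev_mult[OF assms(2) c] assms(1) by (simp add: ev_add ev_smult)
qed

lemma ev_X_power: "ev x ([:0,1:] ^ k) = xp x k"
  using ev_monom[of x 1 k] by (simp add: monom_altdef)

lemma pw_zero_mono: "pw x n = 0 \<Longrightarrow> pw x (n + d) = 0"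
  by (induction d) simp_all

lemma pw_nz_pow:
  assumes sq: "\<And>z. z \<diamond> z = 0 \<Longrightarrow> z = 0" and x: "x \<noteq> 0"
  shows "pw x (2^k - 1) \<noteq> 0"
proof (induction k)
  case 0 then show ?case using x by simp
next
  case (Suc k)
  have e: "(2::nat)^Suc k - 1 = Suc ((2^k - 1) + (2^k - 1))"
  proof -
    obtain t where t: "t = (2::nat)^k" by blast
    have "1 \<le> t" unfolding t by simp
    then have "2 * t - 1 = Suc ((t - 1) + (t - 1))" by arith
    then show ?thesis unfolding t by simp
  qed
  show ?case unfolding e pw_add[symmetric] using Suc sq by blast
qed

lemma pw_nz:
  assumes sq: "\<And>z. z \<diamond> z = 0 \<Longrightarrow> z = 0" and x: "x \<noteq> 0"
  shows "pw x n \<noteq> 0"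
proof
  assume "pw x n = 0"
  then have "pw x (n + (2^n - 1 - n)) = 0" by (rule pw_zero_mono)
  moreover have "n + (2^n - 1 - n) = 2^n - 1"
    using less_exp[of n] by linarith
  ultimately show False using pw_nz_pow[OF sq x, of n] by simp
qed

lemma exists_ann:
  assumes fin: "finite (B::'a set)" and sp: "span B = UNIV"
  obtains m where "m \<noteq> 0" "coeff m 0 = 0" "ev x m = 0"
proof (cases "inj_on (pw x) {..card B}")
  case True
  let ?S = "pw x ` {..card B}"
  have cS: "card ?S = Suc (card B)" using True by (simp add: card_image)
  have "\<not> independent ?S"
  proof
    assume "independent ?S"
    then have "card ?S \<le> card B"
      using real_vector.independent_span_bound[OF fin \<open>independent ?S\<close>] sp by auto
    then show False using cS by simp
  qed
  then obtain u where u: "\<exists>v\<in>?S. u v \<noteq> 0" "(\<Sum>v\<in>?S. u v *\<^sub>R v) = 0"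
    using dependent_finite[of ?S] by auto
  define m where "m = (\<Sum>i\<le>card B. monom (u (pw x i)) (Suc i))"
  have c0: "coeff m 0 = 0" unfolding m_def by (simp add: coeff_sum)
  have "ev x m = (\<Sum>i\<le>card B. u (pw x i) *\<^sub>R pw x i)"
    unfolding m_def by (simp add: ev_sum ev_monom)
  also have "\<dots> = (\<Sum>v\<in>?S. u v *\<^sub>R v)"
    using sum.reindex[OF True, of "\<lambda>v. u v *\<^sub>R v"] by simp
  finally have ev0: "ev x m = 0" using u(2) by simp
  obtain i where i: "i \<le> card B" "u (pw x i) \<noteq> 0" using u(1) by auto
  have "coeff m (Suc i) = (\<Sum>j\<le>card B. if j = i then u (pw x j) else 0)"
    unfolding m_def by (simp add: coeff_sum cong: if_cong)
  also have "\<dots> = u (pw x i)" using i(1) by (simp add: sum.delta)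
  finally have "m \<noteq> 0" using i(2) by auto
  then show ?thesis using that c0 ev0 by blast
next
  case False
  then obtain i j where ij: "i \<noteq> j" "pw x i = pw x j"
    unfolding inj_on_def by blast
  define m where "m = monom (1::real) (Suc i) - monom 1 (Suc j)"
  have "coeff m (Suc i) = 1" unfolding m_def using ij(1) by simp
  then have "m \<noteq> 0" by auto
  moreover have "coeff m 0 = 0" unfolding m_def by simp
  moreover have "ev x m = 0" unfolding m_def using ij(2) by (simp add: ev_diff ev_monom)
  ultimately show ?thesis using that by blast
qed

lemma exists_idem:
  assumes fin: "finite (B::'a set)" and sp: "span B = UNIV"
    and sq: "\<And>z. z \<diamond> z = 0 \<Longrightarrow> z = 0" and x: "(x::'a) \<noteq> 0"
  obtains e where "e \<noteq> 0" "e \<diamond> e = e"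
proof -
  obtain m where m: "m \<noteq> 0" "coeff m 0 = 0" "ev x m = 0"
    using exists_ann[OF fin sp] by blast
  define k where "k = order 0 m"
  define X where "X = [:0,1::real:]"
  obtain g where g: "m = X ^ k * g" "\<not> X dvd g"
    using order_decomp[OF m(1), of 0] unfolding k_def X_def by auto
  have "poly m 0 = 0" using m(2) by (simp add: poly_0_coeff_0)
  then have k0: "k \<noteq> 0" unfolding k_def using m(1) order_root by blast
  have "prime_elem X" unfolding X_def by (rule prime_elem_linear_field_poly) simp
  then have "coprime X g" using g(2) prime_elem_imp_coprime[of X g] by simp
  then have "coprime (X ^ k) g" by simp
  then have gcd1: "gcd (X ^ k) g = 1" by simp
  define a where "a = fst (bezout_coefficients (X ^ k) g)"
  define b where "b = snd (bezout_coefficients (X ^ k) g)"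
  have bez: "a * X ^ k + b * g = 1"
    using bezout_coefficients_fst_snd[of "X ^ k" g] gcd1 unfolding a_def b_def by simp
  define e where "e = a * X ^ k"
  have ce: "coeff e 0 = 0" unfolding e_def X_def using k0
    by (simp add: poly_0_coeff_0[symmetric] poly_mult)
  have ckx: "coeff (X ^ k) 0 = 0" unfolding X_def using k0
    by (simp add: poly_0_coeff_0[symmetric])
  have "e * e - e = m * (- (a * b))"
  proof -
    have "e - 1 = - (b * g)" using bez unfolding e_def by (simp add: algebra_simps eq_diff_eq)
    have "e * e - e = e * (e - 1)" by (simp add: algebra_simps)
    also have "\<dots> = e * (- (b * g))" using \<open>e - 1 = - (b * g)\<close> by simp
    also have "\<dots> = m * (- (a * b))" unfolding e_def g(1) by (simp add: algebra_simps)
    finally show ?thesis .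
  qed
  then have "ev x (e * e) - ev x e = 0"
    using ev_mult_zero[OF m(3) m(2), of "- (a * b)"] by (simp only: ev_diff[symmetric])
  then have idem: "ev x e \<diamond> ev x e = ev x e" using ev_mult[OF ce ce] by simp
  have "X ^ k = X ^ k * (a * X ^ k + b * g)" using bez by simp
  also have "\<dots> = e * X ^ k + m * b" unfolding e_def g(1) by (simp add: algebra_simps)
  finally have "ev x (X ^ k) = ev x e \<diamond> ev x (X ^ k)"
    using ev_mult[OF ce ckx] ev_mult_zero[OF m(3) m(2), of b] by (metis add.right_neutral ev_add)
  moreover have "ev x (X ^ k) \<noteq> 0"
    unfolding X_def ev_X_power using k0 pw_nz[OF sq x] by (cases k) auto
  ultimately have "ev x e \<noteq> 0" by auto
  then show ?thesis using idem that by blast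
qed

lemma main:
  assumes B: "isbasis (B::'a set)"
    and sq: "\<And>z. z \<diamond> z = 0 \<Longrightarrow> z = 0"
    and nz: "\<exists>x y. x \<diamond> y \<noteq> 0"
    and simple: "\<forall>I. jordan_ideal mult I \<longrightarrow> I = {0} \<or> I = UNIV"
    and tl: "two_local_derivation mult \<Delta>"
  shows "jordan_derivation mult \<Delta>"
proof -
  define f where "f w = trc B (\<lambda>v. w \<diamond> v)" for w
  have f_add: "f (a + b) = f a + f b" for a b
    unfolding f_def add_left by (rule trc_add[OF B])
  have f_scale: "f (c *\<^sub>R a) = c * f a" for c a
    unfolding f_def scale_left by (rule trc_scale[OF B])
  have f_diff: "f (a - b) = f a - f b" for a b
    unfolding f_def diff_left by (rule trc_diff[OF B])
  have f_zero: "f 0 = 0" using f_scale[of 0 0] by simp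
  have fD: "f (D w) = 0" if D: "jordan_derivation mult D" for D w
  proof -
    have lD: "linear D" and dD: "\<And>x y. D (x \<diamond> y) = D x \<diamond> y + x \<diamond> D y"
      using D unfolding jordan_derivation_def by auto
    have "(\<lambda>v. D w \<diamond> v) = (\<lambda>v. D (w \<diamond> v) - w \<diamond> D v)" by (rule ext) (simp add: dD)
    then have "f (D w) = trc B (\<lambda>v. D (w \<diamond> v)) - trc B (\<lambda>v. w \<diamond> D v)"
      unfolding f_def by (simp add: trc_diff[OF B])
    also have "\<dots> = 0" using trc_comm[OF B lD linear_L[of w]] by simp
    finally show ?thesis .
  qed
  have fassoc: "f ((a \<diamond> b) \<diamond> c) = f (a \<diamond> (b \<diamond> c))" for a b c
  proof -
    have "(a \<diamond> b) \<diamond> c - a \<diamond> (b \<diamond> c) = Dr c a b"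
      unfolding Dr_def by (simp add: comm[of _ c])
    then have "f ((a \<diamond> b) \<diamond> c) - f (a \<diamond> (b \<diamond> c)) = 0"
      using fD[OF Dr_jd] by (simp add: f_diff[symmetric])
    then show ?thesis by simp
  qed
  define I where "I = {u. \<forall>y. f (u \<diamond> y) = 0}"
  have "jordan_ideal mult I"
    unfolding jordan_ideal_def
  proof (intro conjI allI impI)
    show "subspace I" unfolding subspace_def I_def
      by (simp add: f_zero add_left scale_left f_add f_scale)
    fix x y assume "y \<in> I"
    then show "x \<diamond> y \<in> I" unfolding I_def
      by (simp add: comm[of x y] fassoc)
  qed
  then have I: "I = {0} \<or> I = UNIV" using simple by blast
  obtain x0 y0 where "x0 \<diamond> y0 \<noteq> 0" using nz by blast
  then have x0: "x0 \<noteq> 0" by auto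
  have finB: "finite B" and spB: "span B = UNIV" using B unfolding isbasis_def by auto
  obtain e where e: "e \<noteq> 0" "e \<diamond> e = e" using exists_idem[OF finB spB sq x0] by blast
  have c3: "(3::real) *\<^sub>R a = a + a + a" for a :: 'a
  proof -
    have "(3::real) *\<^sub>R a = (1 + 1 + 1) *\<^sub>R a" by simp
    then show ?thesis by (simp only: scaleR_add_left scaleR_one)
  qed
  have pe: "e \<diamond> v = 3 *\<^sub>R (e \<diamond> (e \<diamond> v)) - 2 *\<^sub>R (e \<diamond> (e \<diamond> (e \<diamond> v)))" for v
    using J2[of e e e v] e(2) by (simp add: c3 scaleR_2 diff_diff_eq)
  have "f e > 0" unfolding f_def
    by (rule trc_peirce[OF B linear_L pe]) (use e in auto)
  then have "f (e \<diamond> e) \<noteq> 0" using e(2) by simp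
  then have "e \<notin> I" unfolding I_def by blast
  then have I0: "I = {0}" using I by auto
  have nondeg: "u = 0" if "\<And>y. f (u \<diamond> y) = 0" for u
    using that I0 unfolding I_def by blast
  have skew: "f (\<Delta> a \<diamond> y) = - f (a \<diamond> \<Delta> y)" for a y
  proof -
    obtain D where D: "jordan_derivation mult D" "\<Delta> a = D a" "\<Delta> y = D y"
      using tl unfolding two_local_derivation_def by blast
    have "D (a \<diamond> y) = D a \<diamond> y + a \<diamond> D y" using D(1) unfolding jordan_derivation_def by blast
    then have "f (D a \<diamond> y) + f (a \<diamond> D y) = 0" using fD[OF D(1), of "a \<diamond> y"] by (simp add: f_add)
    then show ?thesis using D by simp
  qed
  have addD: "\<Delta> (a + b) = \<Delta> a + \<Delta> b" for a b
  proof -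
    have "\<Delta> (a + b) - \<Delta> a - \<Delta> b = 0"
    proof (rule nondeg)
      fix y
      show "f ((\<Delta> (a + b) - \<Delta> a - \<Delta> b) \<diamond> y) = 0"
        by (simp add: diff_left f_diff skew add_left f_add)
    qed
    then show ?thesis by (simp add: algebra_simps)
  qed
  have scD: "\<Delta> (c *\<^sub>R a) = c *\<^sub>R \<Delta> a" for c a
  proof -
    have "\<Delta> (c *\<^sub>R a) - c *\<^sub>R \<Delta> a = 0"
    proof (rule nondeg)
      fix y
      show "f ((\<Delta> (c *\<^sub>R a) - c *\<^sub>R \<Delta> a) \<diamond> y) = 0"
        by (simp add: diff_left f_diff skew scale_left f_scale)
    qed
    then show ?thesis by simp
  qed
  have linD: "linear \<Delta>" by (rule linearI) (simp_all add: addD scD)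
  have sqD: "\<Delta> (a \<diamond> a) = \<Delta> a \<diamond> a + a \<diamond> \<Delta> a" for a
  proof -
    obtain D where D: "jordan_derivation mult D" "\<Delta> a = D a" "\<Delta> (a \<diamond> a) = D (a \<diamond> a)"
      using tl unfolding two_local_derivation_def by blast
    then show ?thesis unfolding jordan_derivation_def by simp
  qed
  define Q where "Q a b = \<Delta> (a \<diamond> b) - \<Delta> a \<diamond> b - a \<diamond> \<Delta> b" for a b
  have Qadd: "Q (a + b) c = Q a c + Q b c" for a b c
    unfolding Q_def by (simp add: add_left addD algebra_simps)
  have Qsym: "Q a b = Q b a" for a b
    unfolding Q_def by (simp add: comm[of a b] comm[of "\<Delta> a" b] comm[of a "\<Delta> b"] algebra_simps)
  have Q0: "Q a a = 0" for a unfolding Q_def using sqD[of a] by simp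
  have leib: "\<Delta> (a \<diamond> b) = \<Delta> a \<diamond> b + a \<diamond> \<Delta> b" for a b
  proof -
    have "Q (a + b) (a + b) = Q a (a + b) + Q b (a + b)" by (rule Qadd)
    also have "Q a (a + b) = Q a a + Q b a" using Qadd[of a b a] Qsym by metis
    also have "Q b (a + b) = Q a b + Q b b" using Qadd[of a b b] Qsym by metis
    finally have "Q a b + Q a b = 0" using Q0 Qsym[of b a] by simp
    then have "2 *\<^sub>R Q a b = 0" by (simp add: scaleR_2)
    then have "Q a b = 0" by simp
    then show ?thesis unfolding Q_def by (simp add: algebra_simps)
  qed
  show ?thesis unfolding jordan_derivation_def using linD leib by blast
qed

end

theorem theorem5p4:
  fixes mult :: "'a::real_vector \<Rightarrow> 'a \<Rightarrow> 'a" and \<Delta> :: "'a \<Rightarrow> 'a"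
  assumes "jordan_algebra mult"
    and "finite_dim_space TYPE('a)"
    and "formally_real mult"
    and "exceptional_jordan mult"
    and "simple_jordan mult"
    and "two_local_derivation mult \<Delta>"
  shows "jordan_derivation mult \<Delta>"
proof -
  interpret jalg mult using assms(1) unfolding jordan_algebra_def by unfold_locales auto
  obtain B0 :: "'a set" where B0: "finite B0" "span B0 = UNIV"
    using assms(2) unfolding finite_dim_space_def by blast
  obtain B where B: "B \<subseteq> B0" "independent B" "B0 \<subseteq> span B"
    using real_vector.maximal_independent_subset[of B0] by blast
  have "span B0 \<subseteq> span B" by (rule real_vector.span_minimal[OF B(3) real_vector.subspace_span])
  then have "span B = UNIV" using B0(2) by auto
  then have "isbasis B" unfolding isbasis_def using B B0 finite_subset by blast
  moreover have "\<And>z. mult z z = 0 \<Longrightarrow> z = 0"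
  proof -
    fix z assume "mult z z = 0"
    have h: "\<forall>(n::nat) (a::nat \<Rightarrow> 'a). (\<Sum>i<n. mult (a i) (a i)) = 0 \<longrightarrow> (\<forall>i<n. a i = 0)"
      using assms(3) unfolding formally_real_def by blast
    show "z = 0" using h[rule_format, where n=1 and a="\<lambda>_. z" and i=0] \<open>mult z z = 0\<close> by simp
  qed
  moreover have "\<exists>x y. mult x y \<noteq> 0" "\<forall>I. jordan_ideal mult I \<longrightarrow> I = {0} \<or> I = UNIV"
    using assms(5) unfolding simple_jordan_def by auto
  ultimately show ?thesis using main assms(6) by blast
qed

end
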